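(* Let $n\ge3$, $1\le k\le n/2$ and $0<a_1\le\dots\le a_{n+1}$ with $a_{n+1}\le a_1\big(\frac{n}{n-k}\big)^{1/6}$. Then the ellipsoid $\{x\in\mathbb{R}^{n+1}:\sum_{i=1}^{n+1}x_i^2/a_i^2=1\}$ satisfies $S\le a(n,k,H,0)$ at every point.
   Context: For a hypersurface in $\mathbb{R}^{n+1}$ with principal curvatures $\lambda_i$, $S=\sum\lambda_i^2$ and $H=\frac1n|\sum\lambda_i|$. For $1\le k\le n/2$, $a(n,k,t,0)=\frac{n^2t^2}{n-k}$. *)

theory Defs
  imports Complex_Main
begin

text \<open>Vectors of R^(n+1) are functions nat => real, coordinates indexed 0..n.\<close>

definition ip :: "nat \<Rightarrow> (nat \<Rightarrow> real) \<Rightarrow> (nat \<Rightarrow> real) \<Rightarrow> real" where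
  "ip n u v = (\<Sum>i\<le>n. u i * v i)"

definition on_ellipsoid :: "nat \<Rightarrow> (nat \<Rightarrow> real) \<Rightarrow> (nat \<Rightarrow> real) \<Rightarrow> bool" where
  "on_ellipsoid n a x \<longleftrightarrow> (\<Sum>i\<le>n. (x i)\<^sup>2 / (a i)\<^sup>2) = 1"

text \<open>Half the gradient of F(x) = sum x_i^2/a_i^2; normal direction of the ellipsoid.\<close>
definition ell_grad :: "(nat \<Rightarrow> real) \<Rightarrow> (nat \<Rightarrow> real) \<Rightarrow> nat \<Rightarrow> real" where
  "ell_grad a x = (\<lambda>i. x i / (a i)\<^sup>2)"

text \<open>Weingarten map (differential of the unit normal nu = g/|g|) applied to v:
  d nu (v) = (D v - <g, D v>/|g|^2 g) / |g|, with D v = (v_i / a_i^2).\<close>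
definition weingarten :: "nat \<Rightarrow> (nat \<Rightarrow> real) \<Rightarrow> (nat \<Rightarrow> real) \<Rightarrow> (nat \<Rightarrow> real) \<Rightarrow> nat \<Rightarrow> real" where
  "weingarten n a x v =
     (let g = ell_grad a x; Dv = (\<lambda>i. v i / (a i)\<^sup>2)
      in (\<lambda>i. (Dv i - ip n g Dv / ip n g g * g i) / sqrt (ip n g g)))"

definition principal_curvatures ::
  "nat \<Rightarrow> (nat \<Rightarrow> real) \<Rightarrow> (nat \<Rightarrow> real) \<Rightarrow> (nat \<Rightarrow> real) \<Rightarrow> bool" where
  "principal_curvatures n a x lam \<longleftrightarrow>
     (\<exists>e :: nat \<Rightarrow> nat \<Rightarrow> real.
        (\<forall>j<n. \<forall>l<n. ip n (e j) (e l) = (if j = l then 1 else 0)) \<and>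
        (\<forall>j<n. ip n (e j) (ell_grad a x) = 0) \<and>
        (\<forall>j<n. \<forall>i\<le>n. weingarten n a x (e j) i = lam j * e j i))"

definition S_curv :: "nat \<Rightarrow> (nat \<Rightarrow> real) \<Rightarrow> real" where
  "S_curv n lam = (\<Sum>j<n. (lam j)\<^sup>2)"

definition H_curv :: "nat \<Rightarrow> (nat \<Rightarrow> real) \<Rightarrow> real" where
  "H_curv n lam = \<bar>\<Sum>j<n. lam j\<bar> / real n"

definition a_fun0 :: "nat \<Rightarrow> nat \<Rightarrow> real \<Rightarrow> real" where
  "a_fun0 n k t = (real n)\<^sup>2 * t\<^sup>2 / (real n - real k)"

end

theory Submission
  imports Defs
begin

lemma mono_a:
  fixes a :: "nat \<Rightarrow> real"
  assumes "\<forall>i<n. a i \<le> a (Suc i)" "j \<le> n"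
  shows "a 0 \<le> a j \<and> a j \<le> a n"
proof -
  have up: "a i \<le> a (i + d)" if "i + d \<le> n" for i d using that
  proof (induction d)
    case 0 then show ?case by simp
  next
    case (Suc d)
    then have "a i \<le> a (i + d)" by simp
    also have "\<dots> \<le> a (Suc (i + d))" using assms(1) Suc.prems by simp
    finally show ?case by simp
  qed
  show ?thesis using up[of 0 j] up[of j "n - j"] assms(2) by simp
qed

lemma final_ineq:
  fixes lam :: "nat \<Rightarrow> real" and m M :: real
  assumes "k < n" "0 < m" "\<forall>j<n. m \<le> lam j \<and> lam j \<le> M"
    and "(real n - real k) * M \<le> real n * m"
  shows "(real n - real k) * (\<Sum>j<n. (lam j)\<^sup>2) \<le> (\<Sum>j<n. lam j)\<^sup>2"
proof -
  let ?s = "\<Sum>j<n. lam j"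
  have Q: "(\<Sum>j<n. (lam j)\<^sup>2) \<le> M * ?s"
    unfolding sum_distrib_left
  proof (rule sum_mono)
    fix j assume "j \<in> {..<n}"
    then have "m \<le> lam j" "lam j \<le> M" using assms(3) by auto
    then show "(lam j)\<^sup>2 \<le> M * lam j" using assms(2)
      by (simp add: power2_eq_square mult_right_mono)
  qed
  have s: "real n * m \<le> ?s"
  proof -
    have "(\<Sum>j<n. m) \<le> ?s" by (rule sum_mono) (use assms(3) in auto)
    then show ?thesis by simp
  qed
  have s0: "0 \<le> ?s" using s assms(2) by (smt (verit) mult_nonneg_nonneg of_nat_0_le_iff)
  have nk: "0 \<le> real n - real k" using assms(1) by simp
  have "(real n - real k) * (\<Sum>j<n. (lam j)\<^sup>2) \<le> (real n - real k) * (M * ?s)"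
    using Q nk by (rule mult_left_mono)
  also have "\<dots> = ((real n - real k) * M) * ?s" by simp
  also have "\<dots> \<le> (real n * m) * ?s" using assms(4) s0 by (rule mult_right_mono)
  also have "\<dots> \<le> ?s * ?s" using s s0 by (rule mult_right_mono)
  finally show ?thesis by (simp add: power2_eq_square)
qed

theorem mainTheorem8:
  fixes n k :: nat and a x lam :: "nat \<Rightarrow> real"
  assumes "n \<ge> 3" and "1 \<le> k" and "2 * k \<le> n"
    and "0 < a 0" and "\<forall>i<n. a i \<le> a (Suc i)"
    and "a n \<le> a 0 * (real n / (real n - real k)) powr (1/6)"
    and "on_ellipsoid n a x"
    and "principal_curvatures n a x lam"
  shows "S_curv n lam \<le> a_fun0 n k (H_curv n lam)"
proof -
  define A where "A = a n"
  define b where "b = a 0"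
  have b0: "0 < b" using assms(4) b_def by simp
  have bnd: "b \<le> a i \<and> a i \<le> A" if "i \<le> n" for i
    using mono_a[OF assms(5) that] A_def b_def by simp
  have A0: "0 < A" using bnd[of n] b0 by simp
  have ai0: "0 < a i" if "i \<le> n" for i using bnd[OF that] b0 by simp
  have inv: "1/A\<^sup>2 \<le> 1/(a i)\<^sup>2 \<and> 1/(a i)\<^sup>2 \<le> 1/b\<^sup>2" if "i \<le> n" for i
  proof -
    have "b\<^sup>2 \<le> (a i)\<^sup>2" "(a i)\<^sup>2 \<le> A\<^sup>2" using bnd[OF that] b0
      by (auto intro: power_mono)
    then show ?thesis using b0 ai0[OF that]
      by (auto intro!: divide_left_mono mult_pos_pos)
  qed
  define g where "g = ell_grad a x"
  define G where "G = ip n g g"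
  have ell: "(\<Sum>i\<le>n. (x i)\<^sup>2 / (a i)\<^sup>2) = 1" using assms(7) on_ellipsoid_def by simp
  have Gexp: "G = (\<Sum>i\<le>n. ((x i)\<^sup>2 / (a i)\<^sup>2) * (1/(a i)\<^sup>2))"
    unfolding G_def g_def ip_def ell_grad_def
    by (rule sum.cong) (auto simp: power2_eq_square)
  have Glo: "1/A\<^sup>2 \<le> G"
  proof -
    have "1/A\<^sup>2 = (\<Sum>i\<le>n. ((x i)\<^sup>2 / (a i)\<^sup>2) * (1/A\<^sup>2))"
      unfolding sum_distrib_right[symmetric] ell by simp
    also have "\<dots> \<le> G" unfolding Gexp
      by (rule sum_mono, rule mult_left_mono, metis atMost_iff inv, simp)
    finally show ?thesis .
  qed
  have Ghi: "G \<le> 1/b\<^sup>2"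
  proof -
    have "G \<le> (\<Sum>i\<le>n. ((x i)\<^sup>2 / (a i)\<^sup>2) * (1/b\<^sup>2))" unfolding Gexp
      by (rule sum_mono, rule mult_left_mono, metis atMost_iff inv, simp)
    also have "\<dots> = 1/b\<^sup>2"
      unfolding sum_distrib_right[symmetric] ell by simp
    finally show ?thesis .
  qed
  have G0: "0 < G" using Glo A0 by (smt (verit) divide_pos_pos zero_less_power)
  define sG where "sG = sqrt G"
  have sGlo: "1/A \<le> sG" unfolding sG_def
    by (rule real_le_rsqrt) (use Glo in \<open>simp add: power_divide\<close>)
  have sGhi: "sG \<le> 1/b"
  proof -
    have "sG \<le> sqrt ((1/b)\<^sup>2)" unfolding sG_def using Ghi by (simp add: power_divide)
    then show ?thesis using b0 by simp
  qed
  have sG0: "0 < sG" using sGlo A0 by (smt (verit) divide_pos_pos)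
  obtain e :: "nat \<Rightarrow> nat \<Rightarrow> real" where
    orth: "\<forall>j<n. \<forall>l<n. ip n (e j) (e l) = (if j = l then 1 else 0)" and
    tang: "\<forall>j<n. ip n (e j) (ell_grad a x) = 0" and
    eig: "\<forall>j<n. \<forall>i\<le>n. weingarten n a x (e j) i = lam j * e j i"
    using assms(8) unfolding principal_curvatures_def by blast
  have lam_bnd: "b / A\<^sup>2 \<le> lam j \<and> lam j \<le> A / b\<^sup>2" if j: "j < n" for j
  proof -
    define v where "v = e j"
    define Dv where "Dv = (\<lambda>i. v i / (a i)\<^sup>2)"
    define N where "N = ip n v Dv"
    have vv: "ip n v v = 1" using orth j v_def by simp
    have vg: "ip n g v = 0" using tang j v_def g_def by (simp add: ip_def mult.commute)
    have W: "weingarten n a x v = (\<lambda>i. (Dv i - ip n g Dv / G * g i) / sG)"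
      unfolding weingarten_def Dv_def G_def sG_def g_def Let_def by simp
    have "ip n (weingarten n a x v) v = (\<Sum>i\<le>n. lam j * (v i * v i))"
      unfolding ip_def using eig j v_def by (intro sum.cong) auto
    also have "\<dots> = lam j" using vv unfolding ip_def sum_distrib_left[symmetric] by simp
    finally have l1: "ip n (weingarten n a x v) v = lam j" .
    have "ip n (weingarten n a x v) v
        = (\<Sum>i\<le>n. (Dv i * v i) / sG - (ip n g Dv / G / sG) * (g i * v i))"
      unfolding W ip_def using G0 sG0 by (intro sum.cong) (auto simp: field_simps)
    also have "\<dots> = (\<Sum>i\<le>n. Dv i * v i) / sG - (ip n g Dv / G / sG) * ip n g v"
      by (simp add: sum_subtractf sum_divide_distrib sum_distrib_left ip_def)
    also have "\<dots> = N / sG" using vg by (simp add: N_def ip_def mult.commute)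
    finally have lamN: "lam j = N / sG" using l1 by simp
    have Nexp: "N = (\<Sum>i\<le>n. (v i)\<^sup>2 * (1/(a i)\<^sup>2))"
      unfolding N_def ip_def Dv_def by (rule sum.cong) (auto simp: power2_eq_square)
    have vv2: "(\<Sum>i\<le>n. (v i)\<^sup>2) = 1" using vv by (simp add: ip_def power2_eq_square)
    have Nlo: "1/A\<^sup>2 \<le> N"
    proof -
      have "1/A\<^sup>2 = (\<Sum>i\<le>n. (v i)\<^sup>2 * (1/A\<^sup>2))"
        unfolding sum_distrib_right[symmetric] vv2 by simp
      also have "\<dots> \<le> N" unfolding Nexp
        by (rule sum_mono, rule mult_left_mono, metis atMost_iff inv, simp)
      finally show ?thesis .
    qed
    have Nhi: "N \<le> 1/b\<^sup>2"
    proof -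
      have "N \<le> (\<Sum>i\<le>n. (v i)\<^sup>2 * (1/b\<^sup>2))" unfolding Nexp
        by (rule sum_mono, rule mult_left_mono, metis atMost_iff inv, simp)
      also have "\<dots> = 1/b\<^sup>2"
        unfolding sum_distrib_right[symmetric] vv2 by simp
      finally show ?thesis .
    qed
    have N0: "0 < N" using Nlo A0 by (smt (verit) divide_pos_pos zero_less_power)
    have "b / A\<^sup>2 = (1/A\<^sup>2) / (1/b)" using b0 by simp
    also have "\<dots> \<le> N / (1/b)" using mult_right_mono[OF Nlo, of b] b0 by simp
    also have "\<dots> \<le> N / sG" using sGhi sG0 N0 b0 by (intro divide_left_mono) auto
    finally have lo: "b / A\<^sup>2 \<le> lam j" using lamN by simp
    have "N / sG \<le> N / (1/A)" using sGlo sG0 N0 A0 by (intro divide_left_mono) (auto simp: field_simps)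
    also have "\<dots> \<le> (1/b\<^sup>2) / (1/A)" using mult_right_mono[OF Nhi, of A] A0 by simp
    also have "\<dots> = A / b\<^sup>2" by simp
    finally have hi: "lam j \<le> A / b\<^sup>2" using lamN by simp
    show ?thesis using lo hi by simp
  qed
  have kn: "k < n" using assms(2,3) by simp
  define q where "q = real n / (real n - real k)"
  have nk0: "0 < real n - real k" using kn by simp
  have q1: "1 \<le> q" unfolding q_def using nk0 by simp
  have A3: "A ^ 3 \<le> b ^ 3 * q"
  proof -
    have "A ^ 3 \<le> (b * q powr (1/6)) ^ 3"
      using assms(6) A0 unfolding A_def b_def q_def by (intro power_mono) auto
    also have "\<dots> = b ^ 3 * (q powr (1/6)) ^ 3" by (simp add: power_mult_distrib)
    also have "(q powr (1/6)) ^ 3 = q powr (1/2)"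
      using q1 by (simp add: powr_realpow[symmetric] powr_powr)
    also have "q powr (1/2) \<le> q powr 1" using q1 by (intro powr_mono) auto
    also have "\<dots> = q" using q1 by simp
    finally show ?thesis using b0 by simp
  qed
  have cond: "(real n - real k) * (A / b\<^sup>2) \<le> real n * (b / A\<^sup>2)"
  proof -
    have "(real n - real k) * A ^ 3 \<le> (real n - real k) * (b ^ 3 * q)"
      using A3 nk0 by simp
    also have "\<dots> = real n * b ^ 3" unfolding q_def using nk0 by simp
    finally have h: "(real n - real k) * A ^ 3 \<le> real n * b ^ 3" .
    have "(real n - real k) * (A / b\<^sup>2) = ((real n - real k) * A ^ 3) / (A\<^sup>2 * b\<^sup>2)"
      using A0 b0 by (simp add: field_simps power2_eq_square power3_eq_cube)
    also have "\<dots> \<le> (real n * b ^ 3) / (A\<^sup>2 * b\<^sup>2)"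
      using h A0 b0 by (intro divide_right_mono) auto
    also have "\<dots> = real n * (b / A\<^sup>2)"
      using A0 b0 by (simp add: field_simps power2_eq_square power3_eq_cube)
    finally show ?thesis .
  qed
  have m0: "0 < b / A\<^sup>2" using A0 b0 by simp
  have main: "(real n - real k) * (\<Sum>j<n. (lam j)\<^sup>2) \<le> (\<Sum>j<n. lam j)\<^sup>2"
    by (rule final_ineq[OF kn m0 _ cond]) (use lam_bnd in auto)
  have "a_fun0 n k (H_curv n lam) = (\<Sum>j<n. lam j)\<^sup>2 / (real n - real k)"
    unfolding a_fun0_def H_curv_def using kn by (simp add: power_divide)
  then show ?thesis unfolding S_curv_def using main nk0
    by (simp add: pos_le_divide_eq mult.commute)
qed

end
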